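(* Let $N\ge k$ and let $L=L_0+L_s$ be the generator defined in the context. For $V(x)=\frac{1}{N(N-1)}\sum_{1\le m<n\le N}(x_m-x_n)^2$ one has, for all $x\in\mathbb{R}^N$, $$(LV)(x)=\alpha b_2-\frac{\delta\varkappa}{N(N-1)}V(x),\qquad\text{where } \varkappa=\sum_{j=1}^l k_j^2-k>0 .$$
   Context: Fix an integer $k\ge2$ and integers $k_1,\dots,k_l\ge2$ with $k_1+\dots+k_l=k$ (the "signature", fixed independently of $N$). For $N\ge k$, let $\mathcal I$ be the set of ordered $k$-tuples $(i_1,\dots,i_k)$ of pairwise distinct elements of $\{1,\dots,N\}$. For $(i_1,\dots,i_k)\in\mathcal I$ split it into consecutive blocks $\Gamma_1,\dots,\Gamma_l$ of lengths $k_1,\dots,k_l$: $\Gamma_j=(i_{k_1+\dots+k_{j-1}+1},\dots,i_{k_1+\dots+k_j})$, and let $g_j=i_{k_1+\dots+k_{j-1}+1}$ be the first element of $\Gamma_j$. The synchronization map $J^{(i_1,\dots,i_k)}:\mathbb{R}^N\to\mathbb{R}^N$, $x\mapsto y$, is $y_m=x_m$ if $m\notin\{i_1,\dots,i_k\}$ and $y_m=x_{g_j}$ if $m\in\Gamma_j$. Let $\alpha>0,\delta>0$, and let $\rho$ be a probability measure on $\mathbb{R}$ with compact support and $b_2:=\int z^2\rho(dz)>0$. The generator $L=L_0+L_s$ acts on functions $f:\mathbb{R}^N\to\mathbb{R}$ by $(L_0f)(x)=\alpha\sum_{i=1}^N\int\big(f(x+ze_i)-f(x)\big)\rho(dz)$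 ($e_i$ the $i$-th unit vector) and $(L_sf)(x)=\frac{\delta}{N(N-1)\cdots(N-k+1)}\sum_{(i_1,\dots,i_k)\in\mathcal I}\big(f(J^{(i_1,\dots,i_k)}x)-f(x)\big)$. The function $V$ equals the empirical variance $\frac1{N-1}\sum_m(x_m-M(x))^2$, $M(x)=\frac1N\sum_m x_m$. *)

theory Defs
  imports "HOL-Probability.Probability"
begin

text \<open>Configurations x in R^N are represented as functions nat => real; only the
coordinates 1..N are relevant. Index tuples (i_1,...,i_k) are lists.\<close>

definition index_tuples :: "nat \<Rightarrow> nat \<Rightarrow> nat list set" where
  "index_tuples N k = {is. length is = k \<and> distinct is \<and> set is \<subseteq> {1..N}}"

definition block :: "nat list \<Rightarrow> nat list \<Rightarrow> nat \<Rightarrow> nat list" where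
  "block ks is j = take (ks ! j) (drop (sum_list (take j ks)) is)"

definition sync_map :: "nat list \<Rightarrow> nat list \<Rightarrow> (nat \<Rightarrow> real) \<Rightarrow> (nat \<Rightarrow> real)" where
  "sync_map ks is x = (\<lambda>m.
     if \<exists>j<length ks. m \<in> set (block ks is j)
     then x (hd (block ks is (THE j. j < length ks \<and> m \<in> set (block ks is j))))
     else x m)"

definition L0 :: "real \<Rightarrow> real measure \<Rightarrow> nat \<Rightarrow> ((nat \<Rightarrow> real) \<Rightarrow> real) \<Rightarrow> (nat \<Rightarrow> real) \<Rightarrow> real" where
  "L0 \<alpha> \<rho> N f x = \<alpha> * (\<Sum>i=1..N. \<integral>z. (f (x(i := x i + z)) - f x) \<partial>\<rho>)"

definition Ls :: "real \<Rightarrow> nat list \<Rightarrow> nat \<Rightarrow> ((nat \<Rightarrow> real) \<Rightarrow> real) \<Rightarrow> (nat \<Rightarrow> real) \<Rightarrow> real" where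
  "Ls \<delta> ks N f x = \<delta> / real (\<Prod>i<sum_list ks. N - i) *
     (\<Sum>is\<in>index_tuples N (sum_list ks). f (sync_map ks is x) - f x)"

definition gen :: "real \<Rightarrow> real \<Rightarrow> real measure \<Rightarrow> nat list \<Rightarrow> nat \<Rightarrow> ((nat \<Rightarrow> real) \<Rightarrow> real) \<Rightarrow> (nat \<Rightarrow> real) \<Rightarrow> real" where
  "gen \<alpha> \<delta> \<rho> ks N f x = L0 \<alpha> \<rho> N f x + Ls \<delta> ks N f x"

definition Vfun :: "nat \<Rightarrow> (nat \<Rightarrow> real) \<Rightarrow> real" where
  "Vfun N x = 1 / (real N * (real N - 1)) *
     (\<Sum>n\<in>{1..N}. \<Sum>m\<in>{1..<n}. (x m - x n)^2)"

end

theory Submission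
  imports Defs
begin
definition start :: "nat list \<Rightarrow> nat \<Rightarrow> nat" where
  "start ks j = sum_list (take j ks)"

lemma start_Suc: "j < length ks \<Longrightarrow> start ks (Suc j) = start ks j + ks ! j"
  by (simp add: start_def take_Suc_conv_app_nth)

lemma start_mono: "j \<le> j' \<Longrightarrow> start ks j \<le> start ks j'"
proof -
  assume "j \<le> j'"
  then obtain d where "j' = j + d" using le_Suc_ex by blast
  then show ?thesis by (simp add: start_def take_add)
qed

lemma start_le: "start ks j \<le> sum_list ks"
  unfolding start_def
  by (metis append_take_drop_id le_add1 sum_list_append)

lemma block_ex: "p < sum_list ks \<Longrightarrow> \<exists>j. j < length ks \<and> start ks j \<le> p \<and> p < start ks j + ks!j"
proof (induction ks arbitrary: p)
  case Nil then show ?case by simp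
next
  case (Cons a ks)
  show ?case
  proof (cases "p < a")
    case True then show ?thesis by (intro exI[of _ 0]) (simp add: start_def)
  next
    case False
    then obtain j where "j < length ks" "start ks j \<le> p - a" "p - a < start ks j + ks!j"
      using Cons by (metis add_diff_inverse_nat add_less_cancel_left sum_list.Cons)
    then show ?thesis using False by (intro exI[of _ "Suc j"]) (auto simp: start_def)
  qed
qed

lemma block_uniq:
  assumes "j1 < length ks" "start ks j1 \<le> p" "p < start ks j1 + ks!j1"
    "j2 < length ks" "start ks j2 \<le> p" "p < start ks j2 + ks!j2"
  shows "j1 = j2"
proof (rule ccontr)
  assume "j1 \<noteq> j2"
  then consider "j1 < j2" | "j2 < j1" by linarith
  then show False
  proof cases
    case 1
    have "start ks (Suc j1) \<le> start ks j2" using 1 start_mono by (simp add: Suc_le_eq)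
    then show False using assms start_Suc[OF assms(1)] by linarith
  next
    case 2
    have "start ks (Suc j2) \<le> start ks j1" using 2 start_mono by (simp add: Suc_le_eq)
    then show False using assms start_Suc[OF assms(4)] by linarith
  qed
qed

definition bi :: "nat list \<Rightarrow> nat \<Rightarrow> nat" where
  "bi ks p = (THE j. j < length ks \<and> start ks j \<le> p \<and> p < start ks j + ks!j)"

definition st :: "nat list \<Rightarrow> nat \<Rightarrow> nat" where
  "st ks p = start ks (bi ks p)"

lemma bi_eq: "j < length ks \<Longrightarrow> start ks j \<le> p \<Longrightarrow> p < start ks j + ks!j \<Longrightarrow> bi ks p = j"
  unfolding bi_def by (rule the_equality) (auto intro: block_uniq)

lemma bi_props: assumes "p < sum_list ks"
  shows "bi ks p < length ks \<and> start ks (bi ks p) \<le> p \<and> p < start ks (bi ks p) + ks!(bi ks p)"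
proof -
  obtain j where j: "j < length ks" "start ks j \<le> p" "p < start ks j + ks!j"
    using block_ex[OF assms] by blast
  then have "bi ks p = j" by (rule bi_eq)
  then show ?thesis using j by simp
qed

lemma st_less: "p < sum_list ks \<Longrightarrow> st ks p < sum_list ks"
  unfolding st_def using bi_props by (meson le_less_trans)

lemma start_Suc_le: "j < length ks \<Longrightarrow> start ks j + ks!j \<le> sum_list ks"
  using start_Suc[of j ks] start_le[of ks "Suc j"] by simp

lemma in_block_iff:
  assumes "length is = sum_list ks" "j < length ks"
  shows "m \<in> set (block ks is j) \<longleftrightarrow> (\<exists>p. start ks j \<le> p \<and> p < start ks j + ks!j \<and> m = is!p)"
proof -
  have len: "length (block ks is j) = ks!j"
    using start_Suc_le[OF assms(2)] assms(1) by (simp add: block_def start_def[symmetric])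
  have nth: "i < ks!j \<Longrightarrow> block ks is j ! i = is ! (start ks j + i)" for i
    using start_Suc_le[OF assms(2)] assms(1) by (simp add: block_def start_def[symmetric])
  show ?thesis
  proof
    assume "m \<in> set (block ks is j)"
    then obtain i where "i < ks!j" "block ks is j ! i = m" by (metis in_set_conv_nth len)
    then show "\<exists>p. start ks j \<le> p \<and> p < start ks j + ks!j \<and> m = is!p"
      using nth by (intro exI[of _ "start ks j + i"]) auto
  next
    assume "\<exists>p. start ks j \<le> p \<and> p < start ks j + ks!j \<and> m = is!p"
    then obtain p where p: "start ks j \<le> p" "p < start ks j + ks!j" "m = is!p" by blast
    then have "block ks is j ! (p - start ks j) = m" using nth[of "p - start ks j"] by simp
    then show "m \<in> set (block ks is j)" using p len
      by (metis add_diff_inverse_nat add_less_cancel_left not_le nth_mem)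
  qed
qed

lemma hd_block:
  assumes "length is = sum_list ks" "j < length ks" "ks!j > 0"
  shows "hd (block ks is j) = is ! start ks j"
proof -
  have "start ks j < length is" using start_Suc_le[OF assms(2)] assms by simp
  then show ?thesis using assms(3)
    by (simp add: block_def start_def[symmetric] hd_drop_conv_nth)
qed

lemma sync_in:
  assumes "is \<in> index_tuples N (sum_list ks)" "\<forall>kj\<in>set ks. kj > 0" "p < sum_list ks"
  shows "sync_map ks is x (is!p) = x (is ! st ks p)"
proof -
  have len: "length is = sum_list ks" and dist: "distinct is"
    using assms(1) by (auto simp: index_tuples_def)
  let ?j = "bi ks p"
  have bp: "?j < length ks" "start ks ?j \<le> p" "p < start ks ?j + ks!?j" using bi_props[OF assms(3)] by auto
  have mem: "is!p \<in> set (block ks is ?j)" using in_block_iff[OF len bp(1)] bp by blast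
  have the: "(THE j. j < length ks \<and> is!p \<in> set (block ks is j)) = ?j"
  proof (rule the_equality)
    show "?j < length ks \<and> is!p \<in> set (block ks is ?j)" using bp mem by simp
  next
    fix j assume j: "j < length ks \<and> is!p \<in> set (block ks is j)"
    then obtain q where q: "start ks j \<le> q" "q < start ks j + ks!j" "is!p = is!q"
      using in_block_iff[OF len] by blast
    have "q < length is" using q start_Suc_le[of j ks] j len by linarith
    then have "q = p" using q(3) dist assms(3) len by (simp add: nth_eq_iff_index_eq)
    then show "j = ?j" using q j by (intro bi_eq[symmetric]) auto
  qed
  have pos: "ks!?j > 0" using assms(2) bp(1) by simp
  show ?thesis unfolding sync_map_def using bp mem the hd_block[OF len bp(1) pos]
    by (auto simp: st_def)
qed

lemma sync_out:
  assumes "m \<notin> set is"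
  shows "sync_map ks is x m = x m"
proof -
  have "m \<notin> set (block ks is j)" for j
    using assms set_take_subset set_drop_subset unfolding block_def by fast
  then show ?thesis unfolding sync_map_def by auto
qed

lemma sum_set_nth:
  assumes "distinct xs"
  shows "(\<Sum>m\<in>set xs. h m) = (\<Sum>p<length xs. h (xs!p))"
proof -
  have "set xs = (!) xs ` {..<length xs}" by (auto simp: set_conv_nth)
  moreover have "inj_on ((!) xs) {..<length xs}" using assms
    by (auto simp: inj_on_def nth_eq_iff_index_eq)
  ultimately show ?thesis by (simp add: sum.reindex)
qed

lemma sync_sum:
  fixes F :: "real \<Rightarrow> real"
  assumes "is \<in> index_tuples N (sum_list ks)" "\<forall>kj\<in>set ks. kj > 0"
  shows "(\<Sum>m\<in>{1..N}. F (sync_map ks is x m)) =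
    (\<Sum>m\<in>{1..N}. F (x m)) + (\<Sum>p<sum_list ks. F (x (is ! st ks p)) - F (x (is!p)))"
proof -
  have len: "length is = sum_list ks" and dist: "distinct is" and sub: "set is \<subseteq> {1..N}"
    using assms(1) by (auto simp: index_tuples_def)
  have "(\<Sum>m\<in>{1..N}. F (sync_map ks is x m) - F (x m)) = (\<Sum>m\<in>set is. F (sync_map ks is x m) - F (x m))"
    by (rule sum.mono_neutral_right) (use sub sync_out in auto)
  also have "\<dots> = (\<Sum>p<sum_list ks. F (sync_map ks is x (is!p)) - F (x (is!p)))"
    using sum_set_nth[OF dist] len by simp
  also have "\<dots> = (\<Sum>p<sum_list ks. F (x (is ! st ks p)) - F (x (is!p)))"
    using sync_in[OF assms] by simp
  finally show ?thesis by (simp add: sum_subtractf)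
qed

lemma finite_T: "finite (index_tuples N k)"
proof -
  have "index_tuples N k \<subseteq> {xs. set xs \<subseteq> {1..N} \<and> length xs = k}"
    by (auto simp: index_tuples_def)
  then show ?thesis using finite_lists_length_eq[of "{1..N}" k] finite_subset by blast
qed

lemma swap2:
  fixes a b a' b' :: nat
  assumes "a \<in> S" "b \<in> S" "a' \<in> S" "b' \<in> S" "a \<noteq> b" "a' \<noteq> b'"
  shows "\<exists>\<tau>. inj \<tau> \<and> \<tau> ` S \<subseteq> S \<and> \<tau> a = a' \<and> \<tau> b = b'"
proof -
  define t where "t = Transposition.transpose a a'"
  define \<tau> where "\<tau> = Transposition.transpose (t b) b' \<circ> t"
  have tb: "t b \<noteq> a'" using assms unfolding t_def by (auto simp: Transposition.transpose_def)
  have "t b \<in> S" using assms unfolding t_def by (auto simp: Transposition.transpose_def)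
  have "inj \<tau>" unfolding \<tau>_def t_def by (simp add: inj_compose)
  moreover have "\<tau> ` S \<subseteq> S" using assms \<open>t b \<in> S\<close> unfolding \<tau>_def t_def
    by (auto simp: Transposition.transpose_def)
  moreover have "\<tau> a = a'" using tb assms unfolding \<tau>_def t_def by (auto simp: Transposition.transpose_def)
  moreover have "\<tau> b = b'" unfolding \<tau>_def by simp
  ultimately show ?thesis by blast
qed

lemma fiber_le:
  assumes "a \<in> {1..N}" "b \<in> {1..N}" "a' \<in> {1..N}" "b' \<in> {1..N}" "a \<noteq> b" "a' \<noteq> b'" "p < k" "q < k"
  shows "card {is\<in>index_tuples N k. is!p = a \<and> is!q = b} \<le> card {is\<in>index_tuples N k. is!p = a' \<and> is!q = b'}"
proof -
  obtain \<tau> where t: "inj \<tau>" "\<tau> ` {1..N} \<subseteq> {1..N}" "\<tau> a = a'" "\<tau> b = b'"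
    using swap2[OF assms(1-6)] by blast
  show ?thesis
  proof (rule card_inj_on_le)
    show "inj_on (map \<tau>) {is\<in>index_tuples N k. is!p = a \<and> is!q = b}"
      using t(1) by (auto simp: inj_on_def inj_map_eq_map)
    show "map \<tau> ` {is\<in>index_tuples N k. is!p = a \<and> is!q = b} \<subseteq> {is\<in>index_tuples N k. is!p = a' \<and> is!q = b'}"
    proof
      fix ys assume "ys \<in> map \<tau> ` {is\<in>index_tuples N k. is!p = a \<and> is!q = b}"
      then obtain xs where xs: "xs \<in> index_tuples N k" "xs!p = a" "xs!q = b" "ys = map \<tau> xs" by blast
      have "set ys \<subseteq> {1..N}" using xs t(2) by (auto simp: index_tuples_def)
      then show "ys \<in> {is\<in>index_tuples N k. is!p = a' \<and> is!q = b'}"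
        using xs t assms(7,8) by (auto simp: index_tuples_def distinct_map inj_on_subset[OF t(1)])
    qed
    show "finite {is\<in>index_tuples N k. is!p = a' \<and> is!q = b'}" using finite_T by simp
  qed
qed

lemma pair_sum:
  fixes g :: "nat \<Rightarrow> nat \<Rightarrow> real"
  assumes "p < k" "q < k" "p \<noteq> q" "N \<ge> 2"
  shows "(\<Sum>is\<in>index_tuples N k. g (is!p) (is!q)) =
     real (card (index_tuples N k)) / (real N * (real N - 1)) * (\<Sum>a\<in>{1..N}. \<Sum>b\<in>{1..N}-{a}. g a b)"
proof -
  let ?T = "index_tuples N k"
  let ?P = "Sigma {1..N} (\<lambda>a. {1..N}-{a})"
  let ?f = "\<lambda>is. (is!p, is!q)"
  define c where "c = card {is\<in>?T. is!p = 1 \<and> is!q = 2}"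
  have fib: "card {is\<in>?T. ?f is = ab} = c" if abP: "ab \<in> ?P" for ab
  proof -
    obtain a b where ab: "ab = (a,b)" "a \<in> {1..N}" "b \<in> {1..N}" "a \<noteq> b" using abP by (cases ab) auto
    have "1 \<in> {1..N}" "2 \<in> {1..(N::nat)}" using assms by auto
    then have "card {is\<in>?T. is!p = a \<and> is!q = b} = c"
      unfolding c_def using fiber_le[of a N b 1 2 p k q] fiber_le[of 1 N 2 a b p k q] ab assms
      by (intro antisym) auto
    then show ?thesis using ab by simp
  qed
  have img: "?f ` ?T \<subseteq> ?P"
    using assms(1-3) by (auto simp: index_tuples_def nth_eq_iff_index_eq)
  have finP: "finite ?P" by auto
  have "(\<Sum>is\<in>?T. g (is!p) (is!q)) = (\<Sum>ab\<in>?P. \<Sum>is\<in>{is\<in>?T. ?f is = ab}. g (is!p) (is!q))"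
    by (rule sum.group[symmetric, OF finite_T finP img])
  also have "\<dots> = (\<Sum>ab\<in>?P. real c * g (fst ab) (snd ab))"
  proof (rule sum.cong[OF refl])
    fix ab assume ab: "ab \<in> ?P"
    have "(\<Sum>is\<in>{is\<in>?T. ?f is = ab}. g (is!p) (is!q)) = (\<Sum>is\<in>{is\<in>?T. ?f is = ab}. g (fst ab) (snd ab))"
      by (rule sum.cong) auto
    then show "(\<Sum>is\<in>{is\<in>?T. ?f is = ab}. g (is!p) (is!q)) = real c * g (fst ab) (snd ab)"
      using fib[OF ab] by simp
  qed
  also have "\<dots> = real c * (\<Sum>a\<in>{1..N}. \<Sum>b\<in>{1..N}-{a}. g a b)"
  proof -
    have "(\<Sum>a\<in>{1..N}. \<Sum>b\<in>{1..N}-{a}. g a b) = (\<Sum>(a,b)\<in>?P. g a b)"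
      by (rule sum.Sigma) auto
    then show ?thesis by (simp add: sum_distrib_left split_beta)
  qed
  finally have 1: "(\<Sum>is\<in>?T. g (is!p) (is!q)) = real c * (\<Sum>a\<in>{1..N}. \<Sum>b\<in>{1..N}-{a}. g a b)" .
  have "card ?T = (\<Sum>ab\<in>?P. card {is\<in>?T. ?f is = ab})"
    using sum.group[OF finite_T finP img, of "\<lambda>_. 1::nat"] by simp
  also have "\<dots> = (\<Sum>ab\<in>?P. c)" using fib by simp
  also have "\<dots> = c * (N * (N - 1))" by (simp add: card_SigmaI)
  finally have "real (card ?T) = real c * (real N * (real N - 1))" using assms(4) by (simp add: of_nat_diff)
  then have "real c = real (card ?T) / (real N * (real N - 1))" using assms(4) by simp
  then show ?thesis using 1 by simp
qed

lemma single_sum: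
  fixes f :: "nat \<Rightarrow> real"
  assumes "p < k" "k \<ge> 2" "N \<ge> 2"
  shows "(\<Sum>is\<in>index_tuples N k. f (is!p)) =
     real (card (index_tuples N k)) / (real N * (real N - 1)) * (\<Sum>a\<in>{1..N}. \<Sum>b\<in>{1..N}-{a}. f a)"
proof -
  define q where "q = (if p = 0 then 1 else 0::nat)"
  have "q < k" "p \<noteq> q" using assms unfolding q_def by auto
  from pair_sum[OF assms(1) this assms(3), of "\<lambda>a b. f a"] show ?thesis .
qed

lemma bi_fiber:
  assumes "j < length ks"
  shows "{q. q < sum_list ks \<and> bi ks q = j} = {start ks j..<start ks j + ks!j}"
proof
  show "{q. q < sum_list ks \<and> bi ks q = j} \<subseteq> {start ks j..<start ks j + ks!j}"
    using bi_props by fastforce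
  show "{start ks j..<start ks j + ks!j} \<subseteq> {q. q < sum_list ks \<and> bi ks q = j}"
    using bi_eq[OF assms] start_Suc_le[OF assms] by fastforce
qed

lemma start_strict:
  assumes "j < j'" "j' < length ks" "\<forall>kj\<in>set ks. kj > 0"
  shows "start ks j < start ks j'"
proof -
  have "start ks (Suc j) \<le> start ks j'" using assms(1) start_mono by (simp add: Suc_le_eq)
  moreover have "ks!j > 0" using assms by simp
  ultimately show ?thesis using start_Suc[of j ks] assms by linarith
qed

lemma st_eq_iff:
  assumes "p < sum_list ks" "q < sum_list ks" "\<forall>kj\<in>set ks. kj > 0"
  shows "st ks p = st ks q \<longleftrightarrow> bi ks p = bi ks q"
proof
  assume e: "st ks p = st ks q"
  show "bi ks p = bi ks q"
  proof (rule ccontr)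
    assume "bi ks p \<noteq> bi ks q"
    then consider "bi ks p < bi ks q" | "bi ks q < bi ks p" by linarith
    then show False using start_strict[OF _ _ assms(3)] bi_props[OF assms(1)] bi_props[OF assms(2)] e
      unfolding st_def by (metis less_irrefl)
  qed
qed (simp add: st_def)

lemma count_st:
  assumes "\<forall>kj\<in>set ks. kj > 0"
  shows "(\<Sum>q<sum_list ks. \<Sum>p<sum_list ks. if st ks q = st ks p then 1 else 0 :: real) = (\<Sum>kj\<leftarrow>ks. real kj ^ 2)"
proof -
  let ?k = "sum_list ks"
  have "(\<Sum>p<?k. if st ks q = st ks p then 1 else 0 :: real) = real (ks ! bi ks q)" if q: "q < ?k" for q
  proof -
    have "(\<Sum>p<?k. if st ks q = st ks p then 1 else 0 :: real) = real (card {p. p < ?k \<and> bi ks p = bi ks q})"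
    proof -
      have "{p. p < ?k \<and> bi ks p = bi ks q} = {x. x < ?k} \<inter> {p. st ks q = st ks p}"
      proof (rule set_eqI)
        fix x
        show "x \<in> {p. p < ?k \<and> bi ks p = bi ks q} \<longleftrightarrow> x \<in> {x. x < ?k} \<inter> {p. st ks q = st ks p}"
          using st_eq_iff[OF q, of x, OF _ assms] by auto
      qed
      then show ?thesis by (simp add: sum.If_cases lessThan_def)
    qed
    also have "\<dots> = real (ks ! bi ks q)" using bi_fiber[of "bi ks q" ks] bi_props[OF q] by simp
    finally show ?thesis .
  qed
  then have "(\<Sum>q<?k. \<Sum>p<?k. if st ks q = st ks p then 1 else 0 :: real) = (\<Sum>q<?k. real (ks ! bi ks q))"
    by simp
  also have "\<dots> = (\<Sum>j<length ks. \<Sum>q\<in>{q. q < ?k \<and> bi ks q = j}. real (ks ! bi ks q))"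
  proof -
    have "bi ks ` {..<?k} \<subseteq> {..<length ks}" using bi_props by auto
    from sum.group[OF finite_lessThan finite_lessThan this, of "\<lambda>q. real (ks ! bi ks q)"]
    show ?thesis by simp
  qed
  also have "\<dots> = (\<Sum>j<length ks. real (ks ! j) ^ 2)"
  proof (rule sum.cong[OF refl])
    fix j assume j: "j \<in> {..<length ks}"
    have "(\<Sum>q\<in>{q. q < ?k \<and> bi ks q = j}. real (ks ! bi ks q)) = (\<Sum>q\<in>{q. q < ?k \<and> bi ks q = j}. real (ks ! j))"
      by simp
    also have "\<dots> = real (ks ! j) ^ 2" using bi_fiber[of j ks] j by (simp add: power2_eq_square)
    finally show "(\<Sum>q\<in>{q. q < ?k \<and> bi ks q = j}. real (ks ! bi ks q)) = real (ks ! j) ^ 2" .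
  qed
  also have "\<dots> = (\<Sum>kj\<leftarrow>ks. real kj ^ 2)"
    by (simp add: sum_list_sum_nth atLeast0LessThan)
  finally show ?thesis .
qed

lemma count_all:
  assumes "\<forall>kj\<in>set ks. kj > 0"
  shows "(\<Sum>q<sum_list ks. \<Sum>p<sum_list ks.
      (if st ks q = st ks p then 0 else 1) - (if st ks q = p then 0 else 1)
      - (if q = st ks p then 0 else 1) + (if q = p then 0 else 1 :: real))
    = - ((\<Sum>kj\<leftarrow>ks. real kj ^ 2) - real (sum_list ks))"
proof -
  let ?k = "sum_list ks"
  have e: "(if a then 0 else 1) = 1 - (if a then 1 else 0::real)" for a by simp
  have 1: "(\<Sum>q<?k. \<Sum>p<?k. if st ks q = p then 1 else 0 :: real) = real ?k"
    using st_less by simp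
  have 2: "(\<Sum>q<?k. \<Sum>p<?k. if q = st ks p then 1 else 0 :: real) = real ?k"
    using st_less by (subst sum.swap) simp
  have 3: "(\<Sum>q<?k. \<Sum>p<?k. if q = p then 1 else 0 :: real) = real ?k"
    by simp
  show ?thesis using count_st[OF assms] 1 2 3
    by (simp add: e sum.distrib sum_subtractf)
qed

definition Q :: "nat \<Rightarrow> (nat \<Rightarrow> real) \<Rightarrow> real" where
  "Q N x = (\<Sum>m\<in>{1..N}. \<Sum>n\<in>{1..N}. (x m - x n)^2)"

lemma half_sum:
  fixes x :: "nat \<Rightarrow> real"
  shows "2 * (\<Sum>n\<in>{1..N}. \<Sum>m\<in>{1..<n}. (x m - x n)^2) = Q N x"
proof (induction N)
  case 0 then show ?case by (simp add: Q_def)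
next
  case (Suc N)
  have sym: "(\<Sum>m\<in>{1..N}. (x (Suc N) - x m)^2) = (\<Sum>m\<in>{1..N}. (x m - x (Suc N))^2)"
    by (simp add: power2_commute)
  have "Q (Suc N) x = Q N x + (\<Sum>m\<in>{1..N}. (x m - x (Suc N))^2) + (\<Sum>n\<in>{1..N}. (x (Suc N) - x n)^2)"
    unfolding Q_def by (simp add: sum.distrib)
  moreover have "{1..<Suc N} = {1..N}" by auto
  ultimately show ?case using Suc sym by (simp add: distrib_left)
qed

lemma Vfun_Q: "Vfun N x = Q N x / (2 * (real N * (real N - 1)))"
  unfolding Vfun_def half_sum[symmetric] by simp

lemma Q_sync:
  fixes x :: "nat \<Rightarrow> real"
  assumes "is \<in> index_tuples N (sum_list ks)" "\<forall>kj\<in>set ks. kj > 0"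
  defines "u \<equiv> \<lambda>p. x (is ! st ks p)" and "v \<equiv> \<lambda>p. x (is ! p)"
  shows "Q N (sync_map ks is x) = Q N x
    + (\<Sum>p<sum_list ks. \<Sum>m\<in>{1..N}. (x m - u p)^2 - (x m - v p)^2)
    + (\<Sum>q<sum_list ks. \<Sum>n\<in>{1..N}. (u q - x n)^2 - (v q - x n)^2)
    + (\<Sum>q<sum_list ks. \<Sum>p<sum_list ks. (u q - u p)^2 - (u q - v p)^2 - (v q - u p)^2 + (v q - v p)^2)"
proof -
  let ?y = "sync_map ks is x"
  let ?k = "sum_list ks"
  define F1 where "F1 = (\<lambda>t. (\<Sum>n\<in>{1..N}. (t - x n)^2) + (\<Sum>p<?k. (t - u p)^2 - (t - v p)^2))"
  have inner: "(\<Sum>n\<in>{1..N}. (t - ?y n)^2) = F1 t" for t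
    using sync_sum[OF assms(1,2), of "\<lambda>s. (t - s)^2" x] unfolding F1_def u_def v_def by simp
  have "Q N ?y = (\<Sum>m\<in>{1..N}. F1 (?y m))" unfolding Q_def using inner by simp
  also have "\<dots> = (\<Sum>m\<in>{1..N}. F1 (x m)) + (\<Sum>q<?k. F1 (u q) - F1 (v q))"
    using sync_sum[OF assms(1,2), of F1 x] unfolding u_def v_def by simp
  also have "(\<Sum>m\<in>{1..N}. F1 (x m)) = Q N x + (\<Sum>p<?k. \<Sum>m\<in>{1..N}. (x m - u p)^2 - (x m - v p)^2)"
    unfolding F1_def Q_def by (simp add: sum.distrib sum.swap[of _ "{..<?k}"])
  also have "(\<Sum>q<?k. F1 (u q) - F1 (v q)) = (\<Sum>q<?k. \<Sum>n\<in>{1..N}. (u q - x n)^2 - (v q - x n)^2)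
    + (\<Sum>q<?k. \<Sum>p<?k. (u q - u p)^2 - (u q - v p)^2 - (v q - u p)^2 + (v q - v p)^2)"
    unfolding F1_def by (simp add: sum.distrib sum_subtractf diff_add_eq diff_diff_eq2 add_diff_eq)
  finally show ?thesis by simp
qed

lemma Q_alt: "(\<Sum>a\<in>{1..N}. \<Sum>b\<in>{1..N}-{a}. (x a - x b)^2) = Q N (x::nat \<Rightarrow> real)"
  unfolding Q_def by (rule sum.cong[OF refl]) (simp add: sum_diff1)

lemma K_sum:
  fixes x :: "nat \<Rightarrow> real"
  assumes "i < k" "j < k" "N \<ge> 2"
  shows "(\<Sum>is\<in>index_tuples N k. (x (is!i) - x (is!j))^2) =
    (if i = j then 0 else 1) * (real (card (index_tuples N k)) / (real N * (real N - 1)) * Q N x)"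
proof (cases "i = j")
  case True then show ?thesis by simp
next
  case False
  from pair_sum[OF assms(1,2) False assms(3), of "\<lambda>a b. (x a - x b)^2"] show ?thesis
    using False unfolding Q_alt[symmetric] by simp
qed

lemma Ls_sum:
  fixes x :: "nat \<Rightarrow> real"
  assumes "\<forall>kj\<in>set ks. kj > 0" "sum_list ks \<ge> 2" "N \<ge> 2"
  defines "T \<equiv> index_tuples N (sum_list ks)"
  shows "(\<Sum>is\<in>T. Q N (sync_map ks is x)) = real (card T) * Q N x
     - ((\<Sum>kj\<leftarrow>ks. real kj ^ 2) - real (sum_list ks)) * (real (card T) / (real N * (real N - 1)) * Q N x)"
proof -
  let ?k = "sum_list ks"
  define D where "D = real (card T) / (real N * (real N - 1)) * Q N x"
  define u where "u = (\<lambda>is p. x (is ! st ks p))"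
  define v where "v = (\<lambda>is p. x (is ! p))"
  have "(\<Sum>is\<in>T. Q N (sync_map ks is x)) = (\<Sum>is\<in>T. Q N x
    + (\<Sum>p<?k. \<Sum>m\<in>{1..N}. (x m - u is p)^2 - (x m - v is p)^2)
    + (\<Sum>q<?k. \<Sum>n\<in>{1..N}. (u is q - x n)^2 - (v is q - x n)^2)
    + (\<Sum>q<?k. \<Sum>p<?k. (u is q - u is p)^2 - (u is q - v is p)^2 - (v is q - u is p)^2 + (v is q - v is p)^2))"
    unfolding u_def v_def T_def using Q_sync[OF _ assms(1)] by (intro sum.cong) auto
  also have "\<dots> = real (card T) * Q N x
    + (\<Sum>p<?k. \<Sum>m\<in>{1..N}. (\<Sum>is\<in>T. (x m - u is p)^2) - (\<Sum>is\<in>T. (x m - v is p)^2))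
    + (\<Sum>q<?k. \<Sum>n\<in>{1..N}. (\<Sum>is\<in>T. (u is q - x n)^2) - (\<Sum>is\<in>T. (v is q - x n)^2))
    + (\<Sum>q<?k. \<Sum>p<?k. (\<Sum>is\<in>T. (u is q - u is p)^2) - (\<Sum>is\<in>T. (u is q - v is p)^2)
         - (\<Sum>is\<in>T. (v is q - u is p)^2) + (\<Sum>is\<in>T. (v is q - v is p)^2))"
    by (simp add: sum.distrib sum_subtractf sum.swap[of _ T])
  also have "(\<Sum>p<?k. \<Sum>m\<in>{1..N}. (\<Sum>is\<in>T. (x m - u is p)^2) - (\<Sum>is\<in>T. (x m - v is p)^2)) = 0"
  proof (intro sum.neutral ballI)
    fix p m assume p: "p \<in> {..<?k}"
    show "(\<Sum>is\<in>T. (x m - u is p)^2) - (\<Sum>is\<in>T. (x m - v is p)^2) = 0"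
      unfolding u_def v_def T_def
      using single_sum[OF st_less[of p ks] assms(2,3), of "\<lambda>a. (x m - x a)^2"]
        single_sum[of p ?k N "\<lambda>a. (x m - x a)^2"] p assms(2,3) by simp
  qed
  also have "(\<Sum>q<?k. \<Sum>n\<in>{1..N}. (\<Sum>is\<in>T. (u is q - x n)^2) - (\<Sum>is\<in>T. (v is q - x n)^2)) = 0"
  proof (intro sum.neutral ballI)
    fix q n assume q: "q \<in> {..<?k}"
    show "(\<Sum>is\<in>T. (u is q - x n)^2) - (\<Sum>is\<in>T. (v is q - x n)^2) = 0"
      unfolding u_def v_def T_def
      using single_sum[OF st_less[of q ks] assms(2,3), of "\<lambda>a. (x a - x n)^2"]
        single_sum[of q ?k N "\<lambda>a. (x a - x n)^2"] q assms(2,3) by simp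
  qed
  also have "(\<Sum>q<?k. \<Sum>p<?k. (\<Sum>is\<in>T. (u is q - u is p)^2) - (\<Sum>is\<in>T. (u is q - v is p)^2)
         - (\<Sum>is\<in>T. (v is q - u is p)^2) + (\<Sum>is\<in>T. (v is q - v is p)^2))
      = (\<Sum>q<?k. \<Sum>p<?k. D * ((if st ks q = st ks p then 0 else 1) - (if st ks q = p then 0 else 1)
      - (if q = st ks p then 0 else 1) + (if q = p then 0 else 1 :: real)))"
  proof (intro sum.cong refl)
    fix q p assume q: "q \<in> {..<?k}" and p: "p \<in> {..<?k}"
    have sq: "st ks q < ?k" and sp: "st ks p < ?k" using st_less p q by auto
    show "(\<Sum>is\<in>T. (u is q - u is p)^2) - (\<Sum>is\<in>T. (u is q - v is p)^2)
         - (\<Sum>is\<in>T. (v is q - u is p)^2) + (\<Sum>is\<in>T. (v is q - v is p)^2)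
      = D * ((if st ks q = st ks p then 0 else 1) - (if st ks q = p then 0 else 1)
      - (if q = st ks p then 0 else 1) + (if q = p then 0 else 1 :: real))"
      unfolding u_def v_def T_def D_def
      using K_sum[OF sq sp assms(3), of x] K_sum[OF sq _ assms(3), of p x]
        K_sum[OF _ sp assms(3), of q x] K_sum[of q ?k p N x] p q assms(3)
      by (simp add: algebra_simps)
  qed
  also have "\<dots> = D * - ((\<Sum>kj\<leftarrow>ks. real kj ^ 2) - real ?k)"
    using count_all[OF assms(1)] by (simp add: sum_distrib_left[symmetric])
  finally have "(\<Sum>is\<in>T. Q N (sync_map ks is x)) = real (card T) * Q N x + 0 + 0 + D * - ((\<Sum>kj\<leftarrow>ks. real kj ^ 2) - real ?k)" .
  then show ?thesis unfolding D_def[symmetric] by (simp add: algebra_simps)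
qed

lemma card_T:
  assumes "k \<le> N"
  shows "card (index_tuples N k) = (\<Prod>i<k. N - i)"
proof -
  have "card (index_tuples N k) = \<Prod>{N - k + 1 .. N}"
    using card_lists_distinct_length_eq[of "{1..N}" k] assms
    by (simp add: index_tuples_def conj_commute)
  also have "\<dots> = (\<Prod>i<k. N - i)" using assms
  proof (induction k)
    case 0 then show ?case by simp
  next
    case (Suc k)
    have "{N - Suc k + 1..N} = insert (N - k) {N - k + 1..N}" using Suc.prems by auto
    then have "\<Prod>{N - Suc k + 1..N} = (N - k) * \<Prod>{N - k + 1..N}" by simp
    then show ?case using Suc by (simp add: mult.commute)
  qed
  finally show ?thesis .
qed

lemma Q_moment: "Q N x = 2 * real N * (\<Sum>m\<in>{1..N}. (x m)^2) - 2 * (\<Sum>m\<in>{1..N}. x m)^2"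
proof -
  let ?S = "{1..N}"
  have "Q N x = (\<Sum>m\<in>?S. \<Sum>n\<in>?S. (x m)^2 + (x n)^2 - 2 * (x m * x n))"
    unfolding Q_def power2_diff by (simp only: mult.assoc)
  also have "\<dots> = (\<Sum>m\<in>?S. \<Sum>n\<in>?S. (x m)^2) + (\<Sum>m\<in>?S. \<Sum>n\<in>?S. (x n)^2) - 2 * (\<Sum>m\<in>?S. \<Sum>n\<in>?S. x m * x n)"
    by (simp add: sum.distrib sum_subtractf sum_distrib_left)
  also have "(\<Sum>m\<in>?S. \<Sum>n\<in>?S. x m * x n) = (\<Sum>m\<in>?S. x m)^2"
    by (simp add: power2_eq_square sum_product)
  finally show ?thesis by (simp add: sum_distrib_left mult.assoc)
qed

lemma Q_upd:
  fixes x :: "nat \<Rightarrow> real"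
  assumes "i \<in> {1..N}"
  shows "Q N (x(i := x i + z)) - Q N x = 4 * z * (real N * x i - (\<Sum>m\<in>{1..N}. x m)) + 2 * (real N - 1) * z^2"
proof -
  have e: "x(i := x i + z) = (\<lambda>m. x m + (if m = i then z else 0))" by auto
  have s1: "(\<Sum>m\<in>{1..N}. x m + (if m = i then z else 0)) = (\<Sum>m\<in>{1..N}. x m) + z"
    using assms by (simp add: sum.distrib)
  have s2: "(\<Sum>m\<in>{1..N}. (x m + (if m = i then z else 0))^2) = (\<Sum>m\<in>{1..N}. (x m)^2) + (2 * z * x i + z^2)"
  proof -
    have "(\<Sum>m\<in>{1..N}. (x m + (if m = i then z else 0))^2) = (\<Sum>m\<in>{1..N}. (x m)^2 + (if m = i then 2 * z * x i + z^2 else 0))"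
      by (rule sum.cong) (auto simp: power2_sum)
    then show ?thesis using assms by (simp add: sum.distrib)
  qed
  show ?thesis unfolding Q_moment e s1 s2 by (simp add: power2_sum algebra_simps)
qed

lemma integrable_moments:
  assumes "sets \<rho> = sets borel" "prob_space \<rho>" "\<exists>K. compact K \<and> emeasure \<rho> (UNIV - K) = 0"
  shows "integrable \<rho> (\<lambda>z::real. z) \<and> integrable \<rho> (\<lambda>z::real. z^2)"
proof -
  obtain K :: "real set" where K: "compact K" "emeasure \<rho> (UNIV - K) = 0" using assms(3) by blast
  obtain B where B: "\<forall>z\<in>K. norm z \<le> B" using compact_imp_bounded[OF K(1)] bounded_iff by blast
  have "open (UNIV - K)" using compact_imp_closed[OF K(1)] by (simp add: open_Diff)
  then have "UNIV - K \<in> sets \<rho>" using assms(1) by simp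
  then have nul: "UNIV - K \<in> null_sets \<rho>" using K(2) by (simp add: null_sets_def)
  have AEK: "AE z in \<rho>. z \<in> K" by (rule AE_I'[OF nul]) auto
  have AE1: "AE z in \<rho>. norm z \<le> B" using AEK B by auto
  have AE2: "AE z in \<rho>. norm (z^2) \<le> B^2" using AE1
  proof eventually_elim
    case (elim z)
    then have "\<bar>z\<bar> ^ 2 \<le> B ^ 2" by (intro power_mono) auto
    then show ?case by simp
  qed
  have meas: "borel_measurable \<rho> = borel_measurable (borel :: real measure)"
    using measurable_cong_sets[OF assms(1) refl] .
  interpret prob_space \<rho> by (rule assms(2))
  have m1: "(\<lambda>z::real. z) \<in> borel_measurable \<rho>" unfolding meas by simp
  have m2: "(\<lambda>z::real. z^2) \<in> borel_measurable \<rho>" unfolding meas by simp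
  show ?thesis
    using integrable_const_bound[of "\<lambda>z. z" B, OF AE1 m1] integrable_const_bound[of "\<lambda>z. z^2" "B^2", OF AE2 m2] by blast
qed

lemma L0_V:
  fixes x :: "nat \<Rightarrow> real"
  assumes "integrable \<rho> (\<lambda>z::real. z)" "integrable \<rho> (\<lambda>z::real. z^2)" "N \<ge> 2"
  shows "L0 \<alpha> \<rho> N (Vfun N) x = \<alpha> * (\<integral>z. z^2 \<partial>\<rho>)"
proof -
  let ?S = "{1..N}"
  define A where "A = (\<lambda>i. real N * x i - (\<Sum>m\<in>?S. x m))"
  define c1 where "c1 = (\<lambda>i. 2 * A i / (real N * (real N - 1)))"
  define c2 where "c2 = 1 / real N"
  have NN: "real N * (real N - 1) \<noteq> 0" using assms(3) by simp
  have pt: "Vfun N (x(i := x i + z)) - Vfun N x = c1 i * z + c2 * z^2" if i: "i \<in> ?S" for i z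
  proof -
    have "Vfun N (x(i := x i + z)) - Vfun N x = (Q N (x(i := x i + z)) - Q N x) / (2 * (real N * (real N - 1)))"
      unfolding Vfun_Q by (simp add: diff_divide_distrib)
    also have "\<dots> = (4 * z * A i + 2 * (real N - 1) * z^2) / (2 * (real N * (real N - 1)))"
      unfolding Q_upd[OF i] A_def by simp
    also have "\<dots> = c1 i * z + c2 * z^2"
      unfolding c1_def c2_def using NN assms(3) by (simp add: field_simps)
    finally show ?thesis .
  qed
  have "L0 \<alpha> \<rho> N (Vfun N) x = \<alpha> * (\<Sum>i\<in>?S. c1 i * (\<integral>z. z \<partial>\<rho>) + c2 * (\<integral>z. z^2 \<partial>\<rho>))"
    unfolding L0_def
  proof (intro arg_cong[where f="\<lambda>t. \<alpha> * t"] sum.cong refl)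
    fix i assume i: "i \<in> ?S"
    have "(\<integral>z. (Vfun N (x(i := x i + z)) - Vfun N x) \<partial>\<rho>) = (\<integral>z. c1 i * z + c2 * z^2 \<partial>\<rho>)"
      using pt[OF i] by simp
    also have "\<dots> = c1 i * (\<integral>z. z \<partial>\<rho>) + c2 * (\<integral>z. z^2 \<partial>\<rho>)"
      using assms(1,2) by simp
    finally show "(\<integral>z. (Vfun N (x(i := x i + z)) - Vfun N x) \<partial>\<rho>) = c1 i * (\<integral>z. z \<partial>\<rho>) + c2 * (\<integral>z. z^2 \<partial>\<rho>)" .
  qed
  also have "(\<Sum>i\<in>?S. c1 i * (\<integral>z. z \<partial>\<rho>) + c2 * (\<integral>z. z^2 \<partial>\<rho>)) =
     (\<Sum>i\<in>?S. c1 i) * (\<integral>z. z \<partial>\<rho>) + real N * c2 * (\<integral>z. z^2 \<partial>\<rho>)"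
    by (simp add: sum.distrib sum_distrib_right)
  also have "(\<Sum>i\<in>?S. c1 i) = 0"
  proof -
    have "(\<Sum>i\<in>?S. A i) = 0" unfolding A_def by (simp add: sum_subtractf sum_distrib_left)
    then show ?thesis unfolding c1_def by (simp add: sum_divide_distrib[symmetric] sum_distrib_left[symmetric])
  qed
  also have "real N * c2 = 1" unfolding c2_def using assms(3) by simp
  finally show ?thesis by simp
qed

theorem lemma2:
  fixes ks :: "nat list" and k N :: nat and \<alpha> \<delta> :: real and \<rho> :: "real measure"
  assumes "k \<ge> 2" and "\<forall>kj\<in>set ks. kj \<ge> 2" and "sum_list ks = k"
    and "N \<ge> k"
    and "\<alpha> > 0" and "\<delta> > 0"
    and "prob_space \<rho>" and "sets \<rho> = sets borel"
    and "\<exists>K. compact K \<and> emeasure \<rho> (UNIV - K) = 0"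
    and "(\<integral>z. z^2 \<partial>\<rho>) > 0"
  shows "(\<Sum>kj\<leftarrow>ks. real kj ^ 2) - real k > 0 \<and>
    (\<forall>x. gen \<alpha> \<delta> \<rho> ks N (Vfun N) x =
       \<alpha> * (\<integral>z. z^2 \<partial>\<rho>) - \<delta> * ((\<Sum>kj\<leftarrow>ks. real kj ^ 2) - real k)
          / (real N * (real N - 1)) * Vfun N x)"
proof -
  have pos: "\<forall>kj\<in>set ks. kj > 0" using assms(2) by fastforce
  have N2: "N \<ge> 2" using assms(1,4) by simp
  define \<kappa> where "\<kappa> = (\<Sum>kj\<leftarrow>ks. real kj ^ 2) - real k"
  have "(\<Sum>kj\<leftarrow>ks. 2 * real kj) \<le> (\<Sum>kj\<leftarrow>ks. real kj ^ 2)"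
  proof (rule sum_list_mono)
    fix kj assume "kj \<in> set ks"
    then have "2 \<le> real kj" using assms(2) by auto
    then have "2 * real kj \<le> real kj * real kj" by (intro mult_right_mono) auto
    then show "2 * real kj \<le> real kj ^ 2" by (simp add: power2_eq_square)
  qed
  moreover have "(\<Sum>kj\<leftarrow>ks. 2 * real kj) = 2 * real k"
    using assms(3) by (simp add: sum_list_const_mult sum_list_of_nat)
  ultimately have kpos: "\<kappa> > 0" unfolding \<kappa>_def using assms(1) by simp
  have integ: "integrable \<rho> (\<lambda>z::real. z)" "integrable \<rho> (\<lambda>z::real. z^2)"
    using integrable_moments[OF assms(8,7,9)] by auto
  have main: "gen \<alpha> \<delta> \<rho> ks N (Vfun N) x =
       \<alpha> * (\<integral>z. z^2 \<partial>\<rho>) - \<delta> * \<kappa> / (real N * (real N - 1)) * Vfun N x" for x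
  proof -
    define T where "T = index_tuples N (sum_list ks)"
    have cT: "card T = (\<Prod>i<k. N - i)" unfolding T_def using card_T[of k N] assms(3,4) by simp
    have cTpos: "card T > 0" unfolding cT using assms(4) by (simp add: prod_pos)
    have NN: "real N * (real N - 1) > 0" using N2 by simp
    have "(\<Sum>is\<in>T. Vfun N (sync_map ks is x) - Vfun N x)
       = ((\<Sum>is\<in>T. Q N (sync_map ks is x)) - real (card T) * Q N x) / (2 * (real N * (real N - 1)))"
      unfolding Vfun_Q by (simp add: sum_subtractf sum_divide_distrib[symmetric] diff_divide_distrib)
    also have "\<dots> = - (\<kappa> * (real (card T) / (real N * (real N - 1)) * Q N x)) / (2 * (real N * (real N - 1)))"
    proof -
      have L: "(\<Sum>is\<in>T. Q N (sync_map ks is x)) = real (card T) * Q N x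
          - \<kappa> * (real (card T) / (real N * (real N - 1)) * Q N x)"
        using Ls_sum[OF pos, of N x] assms(1,3) N2 unfolding T_def \<kappa>_def by simp
      show ?thesis unfolding L by simp
    qed
    finally have s: "(\<Sum>is\<in>T. Vfun N (sync_map ks is x) - Vfun N x) =
      - (\<kappa> * (real (card T) / (real N * (real N - 1)) * Q N x)) / (2 * (real N * (real N - 1)))" .
    have "Ls \<delta> ks N (Vfun N) x = \<delta> / real (card T) * (\<Sum>is\<in>T. Vfun N (sync_map ks is x) - Vfun N x)"
    proof -
      have e: "(\<Prod>i<sum_list ks. N - i) = card T" using cT assms(3) by simp
      show ?thesis unfolding Ls_def e T_def by (rule refl)
    qed
    also have "\<dots> = - \<delta> * \<kappa> / (real N * (real N - 1)) * Vfun N x"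
      unfolding s unfolding Vfun_Q[of N x] using cTpos NN by (simp add: field_simps)
    finally have "Ls \<delta> ks N (Vfun N) x = - \<delta> * \<kappa> / (real N * (real N - 1)) * Vfun N x" .
    then show ?thesis unfolding gen_def L0_V[OF integ N2] by simp
  qed
  show ?thesis using kpos main unfolding \<kappa>_def by simp
qed
end
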